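(* For every integer $n\ge1$ and every $u\in V$, $\Pr(E_{1u})<\dfrac{3}{\ln(n+1)}$.
   Context: For an integer $n\ge1$, the $n$-octahedral graph $G'_n=(V,E')$ is the undirected graph with vertex set $V=\{u\in\mathbb{Z}^3:|u_1|+|u_2|+|u_3|=n\}$ and edge set $E'=\{\{v,w\}\subset V: v\neq w,\ |v_i-w_i|\le 1 \text{ for all } i=1,2,3\}$. For $u,v\in V$, $d_{uv}$ denotes the shortest-path distance in $G'_n$, and $Z_u=\left(\sum_{w\in V\setminus\{u\}} d_{uw}^{-2}\right)^{-1}$. The OSW random graph $G_n=(V,E)$ is the directed graph in which, for every $\{u,v\}\in E'$, both $(u,v),(v,u)\in E$, and in addition each vertex $u\in V$, independently of the others, chooses one vertex $v\in V\setminus\{u\}$ with probability $Z_u d_{uv}^{-2}$ and the long-range edge $(u,v)$ is added; $C_{uv}$ denotes the event that $u$ chooses $v$. For an ordered pair $(x,y)$ of distinct vertices, say $(x,y)$ is of type $s$ if $\{x,y\}\in E'$, and of type $w$ if $d_{xy}\ge2$ and $C_{xy}$ occurs. A C3 rooted at $u$ of type $(t_1,t_2,t_3)\in\{s,w\}^3$ is a triple $(u,a,b)$ of pairwise distinct vertices such that $(u,a)$ is of type $t_1$, $(a,b)$ is of type $t_2$ and $(b,u)$ is of type $t_3$. $E_{1u}$ is the event that there exists a C3 rooted at $u$ of type $(s,s,w)$. *)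

theory Defs
  imports "HOL-Probability.Probability"
begin

type_synonym vtx = "int \<times> int \<times> int"

definition octV :: "nat \<Rightarrow> vtx set" where
  "octV n = {(x,y,z). \<bar>x\<bar> + \<bar>y\<bar> + \<bar>z\<bar> = int n}"

definition octAdj :: "nat \<Rightarrow> vtx \<Rightarrow> vtx \<Rightarrow> bool" where
  "octAdj n v w \<longleftrightarrow> v \<in> octV n \<and> w \<in> octV n \<and> v \<noteq> w \<and>
     \<bar>fst v - fst w\<bar> \<le> 1 \<and> \<bar>fst (snd v) - fst (snd w)\<bar> \<le> 1 \<and>
     \<bar>snd (snd v) - snd (snd w)\<bar> \<le> 1"

definition octRel :: "nat \<Rightarrow> vtx rel" where
  "octRel n = {(v,w). octAdj n v w}"

definition octDist :: "nat \<Rightarrow> vtx \<Rightarrow> vtx \<Rightarrow> nat" where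
  "octDist n u v = (LEAST k. (u,v) \<in> octRel n ^^ k)"

definition octZ :: "nat \<Rightarrow> vtx \<Rightarrow> real" where
  "octZ n u = inverse (\<Sum>w\<in>octV n - {u}. 1 / (real (octDist n u w))^2)"

definition choice_pmf :: "nat \<Rightarrow> vtx \<Rightarrow> vtx pmf" where
  "choice_pmf n u = embed_pmf (\<lambda>v. if v \<in> octV n \<and> v \<noteq> u
       then octZ n u / (real (octDist n u v))^2 else 0)"

text \<open>Joint distribution of all choices (independent); f u is the vertex chosen by u.
  Outside the vertex set the value is an irrelevant default.\<close>
definition osw_pmf :: "nat \<Rightarrow> (vtx \<Rightarrow> vtx) pmf" where
  "osw_pmf n = Pi_pmf (octV n) (0,0,0) (choice_pmf n)"

definition type_w :: "nat \<Rightarrow> (vtx \<Rightarrow> vtx) \<Rightarrow> vtx \<Rightarrow> vtx \<Rightarrow> bool" where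
  "type_w n f x y \<longleftrightarrow> x \<in> octV n \<and> y \<in> octV n \<and> x \<noteq> y \<and> octDist n x y \<ge> 2 \<and> f x = y"

text \<open>Event E_{1u}: existence of a C3 rooted at u of type (s,s,w).\<close>
definition E1 :: "nat \<Rightarrow> vtx \<Rightarrow> (vtx \<Rightarrow> vtx) set" where
  "E1 n u = {f. \<exists>a b. a \<in> octV n \<and> b \<in> octV n \<and> u \<noteq> a \<and> u \<noteq> b \<and> a \<noteq> b \<and>
      octAdj n u a \<and> octAdj n a b \<and> type_w n f b u}"

end

theory Submission
  imports Defs
begin


lemma finite_octV: "finite (octV n)"
proof -
  have "octV n \<subseteq> {-int n..int n} \<times> {-int n..int n} \<times> {-int n..int n}"
    by (auto simp: octV_def)
  thus ?thesis by (rule finite_subset) auto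
qed

lemma relpow_step: "(v,w) \<in> octRel n ^^ k \<Longrightarrow> octAdj n w w' \<Longrightarrow> (v,w') \<in> octRel n ^^ Suc k"
  by (auto simp: octRel_def)

lemma dist_le: "(v,w) \<in> octRel n ^^ k \<Longrightarrow> octDist n v w \<le> k"
  unfolding octDist_def by (rule Least_le)

lemma dist_pos: "(v,w) \<in> octRel n ^^ k \<Longrightarrow> v \<noteq> w \<Longrightarrow> octDist n v w \<ge> 1"
proof -
  assume a: "(v,w) \<in> octRel n ^^ k" "v \<noteq> w"
  have "(v,w) \<in> octRel n ^^ (octDist n v w)" unfolding octDist_def by (rule LeastI) (rule a(1))
  with a(2) show ?thesis by (cases "octDist n v w") auto
qed

definition gp :: "vtx \<Rightarrow> vtx \<Rightarrow> vtx \<Rightarrow> nat \<Rightarrow> nat \<Rightarrow> vtx" where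
  "gp p s t i l = (fst p + int i * fst s + int l * fst t,
                   fst (snd p) + int i * fst (snd s) + int l * fst (snd t),
                   snd (snd p) + int i * snd (snd s) + int l * snd (snd t))"

definition unitv :: "vtx \<Rightarrow> bool" where
  "unitv s \<longleftrightarrow> s \<noteq> (0,0,0) \<and> \<bar>fst s\<bar> \<le> 1 \<and> \<bar>fst (snd s)\<bar> \<le> 1 \<and> \<bar>snd (snd s)\<bar> \<le> 1"

lemma gp_adj_s: "unitv s \<Longrightarrow> gp p s t i l \<in> octV n \<Longrightarrow> gp p s t (Suc i) l \<in> octV n \<Longrightarrow>
   octAdj n (gp p s t i l) (gp p s t (Suc i) l)"
  by (cases s) (auto simp: octAdj_def gp_def unitv_def algebra_simps)

lemma gp_adj_t: "unitv t \<Longrightarrow> gp p s t i l \<in> octV n \<Longrightarrow> gp p s t i (Suc l) \<in> octV n \<Longrightarrow>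
   octAdj n (gp p s t i l) (gp p s t i (Suc l))"
  by (cases t) (auto simp: octAdj_def gp_def unitv_def algebra_simps)

lemma grid_reach:
  assumes "unitv s" "unitv t" "\<And>i l. i + l \<le> m \<Longrightarrow> gp p s t i l \<in> octV n"
  shows "i + l \<le> m \<Longrightarrow> (p, gp p s t i l) \<in> octRel n ^^ (i + l)"
proof (induction "i + l" arbitrary: i l)
  case 0
  then show ?case by (simp add: gp_def)
next
  case (Suc k)
  show ?case
  proof (cases l)
    case 0
    then obtain i' where i': "i = Suc i'" using Suc by (cases i) auto
    have "(p, gp p s t i' l) \<in> octRel n ^^ (i' + l)" using Suc i' by auto
    moreover have "octAdj n (gp p s t i' l) (gp p s t i l)"
      using gp_adj_s[OF assms(1)] assms(3) Suc i' by auto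
    ultimately show ?thesis using i' relpow_step by fastforce
  next
    case (Suc l')
    have "(p, gp p s t i l') \<in> octRel n ^^ (i + l')" using Suc.hyps Suc.prems Suc by auto
    moreover have "octAdj n (gp p s t i l') (gp p s t i l)"
      using gp_adj_t[OF assms(2)] assms(3) Suc.prems Suc by auto
    ultimately show ?thesis using Suc relpow_step by fastforce
  qed
qed



lemma reach1:
  assumes "x + y + z = n" "j \<le> x" "a \<le> j"
  shows "((int x, int y, int z), (int x - int j, int y + int a, int z + int j - int a)) \<in> octRel n ^^ j"
proof -
  have "((int x, int y, int z), gp (int x, int y, int z) (-1,1,0) (-1,0,1) a (j - a)) \<in> octRel n ^^ (a + (j - a))"
    by (rule grid_reach[where m = x]) (use assms in \<open>auto simp: unitv_def gp_def octV_def\<close>)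
  moreover have "gp (int x, int y, int z) (-1,1,0) (-1,0,1) a (j - a) = (int x - int j, int y + int a, int z + int j - int a)"
    using assms by (simp add: gp_def of_nat_diff)
  ultimately show ?thesis using assms by simp
qed

lemma reach2:
  assumes "x + y + z = n" "k \<le> y" "a \<le> k"
  shows "((int x, int y, int z), (int x + int a, int y - int k, int z + int k - int a)) \<in> octRel n ^^ k"
proof -
  have "((int x, int y, int z), gp (int x, int y, int z) (1,-1,0) (0,-1,1) a (k - a)) \<in> octRel n ^^ (a + (k - a))"
    by (rule grid_reach[where m = y]) (use assms in \<open>auto simp: unitv_def gp_def octV_def\<close>)
  moreover have "gp (int x, int y, int z) (1,-1,0) (0,-1,1) a (k - a) = (int x + int a, int y - int k, int z + int k - int a)"
    using assms by (simp add: gp_def of_nat_diff)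
  ultimately show ?thesis using assms by simp
qed

lemma reach3:
  assumes "x + y + z = n" "k \<le> z" "a \<le> k"
  shows "((int x, int y, int z), (int x + int a, int y + int k - int a, int z - int k)) \<in> octRel n ^^ k"
proof -
  have "((int x, int y, int z), gp (int x, int y, int z) (1,0,-1) (0,1,-1) a (k - a)) \<in> octRel n ^^ (a + (k - a))"
    by (rule grid_reach[where m = z]) (use assms in \<open>auto simp: unitv_def gp_def octV_def\<close>)
  moreover have "gp (int x, int y, int z) (1,0,-1) (0,1,-1) a (k - a) = (int x + int a, int y + int k - int a, int z - int k)"
    using assms by (simp add: gp_def of_nat_diff)
  ultimately show ?thesis using assms by simp
qed

lemma reach4:
  assumes "x + y + z = n" "j \<le> x" "a \<le> j"
  shows "((int x, int y, int z), (int x - int j, int y + int z + int a, - (int j - int a))) \<in> octRel n ^^ (z + j)"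
proof -
  have 1: "((int x, int y, int z), gp (int x, int y, int z) (0,1,-1) (0,1,-1) z 0) \<in> octRel n ^^ (z + 0)"
    by (rule grid_reach[where m = z]) (use assms in \<open>auto simp: unitv_def gp_def octV_def\<close>)
  have c: "gp (int x, int y, int z) (0,1,-1) (0,1,-1) z 0 = (int x, int y + int z, 0)"
    by (simp add: gp_def)
  have 2: "((int x, int y + int z, 0), gp (int x, int y + int z, 0) (-1,1,0) (-1,0,-1) a (j - a)) \<in> octRel n ^^ (a + (j - a))"
    by (rule grid_reach[where m = x]) (use assms in \<open>auto simp: unitv_def gp_def octV_def\<close>)
  moreover have "gp (int x, int y + int z, 0) (-1,1,0) (-1,0,-1) a (j - a) = (int x - int j, int y + int z + int a, - (int j - int a))"
    using assms by (simp add: gp_def of_nat_diff)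
  ultimately have "((int x, int y + int z, 0), (int x - int j, int y + int z + int a, - (int j - int a))) \<in> octRel n ^^ j"
    using assms by simp
  with 1 c show ?thesis by (simp add: relpow_add relcomp.relcompI)
qed



definition Ssum :: "nat \<Rightarrow> vtx \<Rightarrow> real" where
  "Ssum n b = (\<Sum>w\<in>octV n - {b}. 1 / (real (octDist n b w))^2)"

lemma fam_sum:
  assumes "finite I" "inj_on g I" "g ` I \<subseteq> octV n - {b}" "\<And>i. i\<in>I \<Longrightarrow> (b, g i) \<in> octRel n ^^ (h i)"
  shows "(\<Sum>i\<in>I. 1/(real (h i))^2) \<le> (\<Sum>w\<in>g`I. 1/(real (octDist n b w))^2)"
proof -
  have "(\<Sum>w\<in>g`I. 1/(real (octDist n b w))^2) = (\<Sum>i\<in>I. 1/(real (octDist n b (g i)))^2)"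
    using assms(2) by (simp add: sum.reindex)
  also have "\<dots> \<ge> (\<Sum>i\<in>I. 1/(real (h i))^2)"
  proof (rule sum_mono)
    fix i assume i: "i \<in> I"
    have ne: "b \<noteq> g i" using assms(3) i by auto
    have d1: "octDist n b (g i) \<ge> 1" by (rule dist_pos[OF assms(4)[OF i] ne])
    have d2: "octDist n b (g i) \<le> h i" by (rule dist_le[OF assms(4)[OF i]])
    have "(real (octDist n b (g i)))^2 \<le> (real (h i))^2"
      using d2 by (simp add: power_mono)
    moreover have "0 < (real (octDist n b (g i)))^2" using d1 by simp
    ultimately show "1/(real (h i))^2 \<le> 1/(real (octDist n b (g i)))^2"
      by (simp add: frac_le)
  qed
  finally show ?thesis .
qed

lemma S_sorted:
  assumes xyz: "x + y + z = n" "z \<le> y" "y \<le> x"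
  shows "Ssum n (int x, int y, int z) \<ge>
     (\<Sum>j\<in>{1..x}. (real j + 1) / (real j)^2) + (\<Sum>j\<in>{1..y}. (real j + 1) / (real j)^2)
   + (\<Sum>j\<in>{1..z}. (real j + 1) / (real j)^2) + (\<Sum>j\<in>{1..x}. real j / (real z + real j)^2)"
proof -
  define b where "b = (int x, int y, int z)"
  define I1 where "I1 = Sigma {1..x} (\<lambda>j. {0..j})"
  define I2 where "I2 = Sigma {1..y} (\<lambda>j. {0..j})"
  define I3 where "I3 = Sigma {1..z} (\<lambda>j. {0..j})"
  define I4 where "I4 = Sigma {1..x} (\<lambda>j. {0..<j})"
  define g1 where "g1 = (\<lambda>(j,a). (int x - int j, int y + int a, int z + int j - int a))"
  define g2 where "g2 = (\<lambda>(k,a). (int x + int a, int y - int k, int z + int k - int a))"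
  define g3 where "g3 = (\<lambda>(k,a). (int x + int a, int y + int k - int a, int z - int k))"
  define g4 where "g4 = (\<lambda>(j,a). (int x - int j, int y + int z + int a, - (int j - int a)))"
  have fin: "finite I1" "finite I2" "finite I3" "finite I4" by (auto simp: I1_def I2_def I3_def I4_def)
  have inj: "inj_on g1 I1" "inj_on g2 I2" "inj_on g3 I3" "inj_on g4 I4"
    by (auto simp: inj_on_def I1_def I2_def I3_def I4_def g1_def g2_def g3_def g4_def)
  have sub: "g1 ` I1 \<subseteq> octV n - {b}" "g2 ` I2 \<subseteq> octV n - {b}" "g3 ` I3 \<subseteq> octV n - {b}" "g4 ` I4 \<subseteq> octV n - {b}"
    using xyz by (auto simp: I1_def I2_def I3_def I4_def g1_def g2_def g3_def g4_def b_def octV_def)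
  have disj: "g1 ` I1 \<inter> g2 ` I2 = {}" "g1 ` I1 \<inter> g3 ` I3 = {}" "g1 ` I1 \<inter> g4 ` I4 = {}"
     "g2 ` I2 \<inter> g3 ` I3 = {}" "g2 ` I2 \<inter> g4 ` I4 = {}" "g3 ` I3 \<inter> g4 ` I4 = {}"
    by (auto simp: I1_def I2_def I3_def I4_def g1_def g2_def g3_def g4_def)
  have s1: "(\<Sum>i\<in>I1. 1/(real (fst i))^2) \<le> (\<Sum>w\<in>g1`I1. 1/(real (octDist n b w))^2)"
    by (rule fam_sum[OF fin(1) inj(1) sub(1)]) (use xyz reach1 in \<open>auto simp: I1_def g1_def b_def\<close>)
  have s2: "(\<Sum>i\<in>I2. 1/(real (fst i))^2) \<le> (\<Sum>w\<in>g2`I2. 1/(real (octDist n b w))^2)"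
    by (rule fam_sum[OF fin(2) inj(2) sub(2)]) (use xyz reach2 in \<open>auto simp: I2_def g2_def b_def\<close>)
  have s3: "(\<Sum>i\<in>I3. 1/(real (fst i))^2) \<le> (\<Sum>w\<in>g3`I3. 1/(real (octDist n b w))^2)"
    by (rule fam_sum[OF fin(3) inj(3) sub(3)]) (use xyz reach3 in \<open>auto simp: I3_def g3_def b_def\<close>)
  have s4: "(\<Sum>i\<in>I4. 1/(real (z + fst i))^2) \<le> (\<Sum>w\<in>g4`I4. 1/(real (octDist n b w))^2)"
    by (rule fam_sum[OF fin(4) inj(4) sub(4)]) (use xyz reach4 in \<open>auto simp: I4_def g4_def b_def\<close>)
  have e1: "(\<Sum>i\<in>I1. 1/(real (fst i))^2) = (\<Sum>j\<in>{1..x}. (real j + 1) / (real j)^2)"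
  proof -
    have "(\<Sum>j\<in>{1..x}. \<Sum>a\<in>{0..j}. 1/(real j)^2) = (\<Sum>i\<in>I1. 1/(real (fst i))^2)"
      unfolding I1_def by (subst sum.Sigma) (auto simp: split_def)
    moreover have "(\<Sum>j\<in>{1..x}. \<Sum>a\<in>{0..j}. 1/(real j)^2) = (\<Sum>j\<in>{1..x}. (real j + 1) / (real j)^2)"
      by (intro sum.cong) (auto simp: add.commute)
    ultimately show ?thesis by simp
  qed
  have e2: "(\<Sum>i\<in>I2. 1/(real (fst i))^2) = (\<Sum>j\<in>{1..y}. (real j + 1) / (real j)^2)"
  proof -
    have "(\<Sum>j\<in>{1..y}. \<Sum>a\<in>{0..j}. 1/(real j)^2) = (\<Sum>i\<in>I2. 1/(real (fst i))^2)"
      unfolding I2_def by (subst sum.Sigma) (auto simp: split_def)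
    moreover have "(\<Sum>j\<in>{1..y}. \<Sum>a\<in>{0..j}. 1/(real j)^2) = (\<Sum>j\<in>{1..y}. (real j + 1) / (real j)^2)"
      by (intro sum.cong) (auto simp: add.commute)
    ultimately show ?thesis by simp
  qed
  have e3: "(\<Sum>i\<in>I3. 1/(real (fst i))^2) = (\<Sum>j\<in>{1..z}. (real j + 1) / (real j)^2)"
  proof -
    have "(\<Sum>j\<in>{1..z}. \<Sum>a\<in>{0..j}. 1/(real j)^2) = (\<Sum>i\<in>I3. 1/(real (fst i))^2)"
      unfolding I3_def by (subst sum.Sigma) (auto simp: split_def)
    moreover have "(\<Sum>j\<in>{1..z}. \<Sum>a\<in>{0..j}. 1/(real j)^2) = (\<Sum>j\<in>{1..z}. (real j + 1) / (real j)^2)"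
      by (intro sum.cong) (auto simp: add.commute)
    ultimately show ?thesis by simp
  qed
  have e4: "(\<Sum>i\<in>I4. 1/(real (z + fst i))^2) = (\<Sum>j\<in>{1..x}. real j / (real z + real j)^2)"
  proof -
    have "(\<Sum>j\<in>{1..x}. \<Sum>a\<in>{0..<j}. 1/(real (z + j))^2) = (\<Sum>i\<in>I4. 1/(real (z + fst i))^2)"
      unfolding I4_def by (subst sum.Sigma) (auto simp: split_def)
    moreover have "(\<Sum>j\<in>{1..x}. \<Sum>a\<in>{0..<j}. 1/(real (z + j))^2) = (\<Sum>j\<in>{1..x}. real j / (real z + real j)^2)"
      by (intro sum.cong) auto
    ultimately show ?thesis by simp
  qed
  let ?f = "\<lambda>w. 1/(real (octDist n b w))^2"
  have U: "sum ?f (g1`I1 \<union> g2`I2 \<union> g3`I3 \<union> g4`I4) = sum ?f (g1`I1) + sum ?f (g2`I2) + sum ?f (g3`I3) + sum ?f (g4`I4)"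
    using fin disj by (simp add: sum.union_disjoint Int_Un_distrib2)
  have M: "sum ?f (g1`I1 \<union> g2`I2 \<union> g3`I3 \<union> g4`I4) \<le> Ssum n b"
    unfolding Ssum_def using sub by (intro sum_mono2) (auto simp: finite_octV)
  show ?thesis using U M s1 s2 s3 s4 e1 e2 e3 e4 unfolding b_def by linarith
qed



lemma sumA: "(\<Sum>j\<in>{1..x}. (real j + 1) / (real j)^2) = harm x + (\<Sum>j\<in>{1..x}. 1 / (real j)^2)"
  unfolding harm_def by (subst sum.distrib[symmetric]) (intro sum.cong, auto simp: field_simps power2_eq_square)

lemma sq_nonneg_sum: "(\<Sum>j\<in>{1..x}. 1 / (real j)^2) \<ge> 0"
  by (intro sum_nonneg) auto

lemma sq_sum2: "x \<ge> 2 \<Longrightarrow> (\<Sum>j\<in>{1..x}. 1 / (real j)^2) \<ge> 5/4"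
proof -
  assume x: "x \<ge> 2"
  have "(\<Sum>j\<in>{1..2::nat}. 1 / (real j)^2) \<le> (\<Sum>j\<in>{1..x}. 1 / (real j)^2)"
    using x by (intro sum_mono2) auto
  moreover have "(\<Sum>j\<in>{1..2::nat}. 1 / (real j)^2) = 5/4"
    by (simp add: numeral_2_eq_2)
  ultimately show ?thesis by simp
qed

lemma sq_sum1: "x \<ge> 1 \<Longrightarrow> (\<Sum>j\<in>{1..x}. 1 / (real j)^2) \<ge> 1"
proof -
  assume x: "x \<ge> 1"
  have "(\<Sum>j\<in>{1..1::nat}. 1 / (real j)^2) \<le> (\<Sum>j\<in>{1..x}. 1 / (real j)^2)"
    using x by (intro sum_mono2) auto
  thus ?thesis by simp
qed

lemma keyineq: assumes "s > 0" "x \<le> s" shows "(x::real) / s + 1 / (s + 1) - (x + 1) / (s + 1) \<le> (x+1) / (s+1)^2"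
proof -
  have a0: "1 / (s + 1) - (x + 1) / (s + 1) = (1 - (x + 1)) / (s+1)" by (rule diff_divide_distrib[symmetric])
  have a: "1 / (s + 1) - (x + 1) / (s + 1) = - (x / (s+1))" unfolding a0 by simp
  have b: "(x::real) / s - x / (s+1) = x / (s * (s+1))" using assms by (simp add: field_simps)
  have c: "(x::real) / (s * (s+1)) \<le> (x+1) / (s+1)^2"
    using assms by (simp add: divide_simps power2_eq_square) (simp add: algebra_simps)
  show ?thesis using a b c by linarith
qed

lemma T4_bound:
  assumes "z \<ge> 1"
  shows "(\<Sum>j\<in>{1..x}. real j / (real z + real j)^2) \<ge> harm (z + x) - harm z - real x / (real z + real x)"
proof (induction x)
  case 0
  then show ?case by simp
next
  case (Suc x)
  have zp: "real z \<ge> 1" using assms by simp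
  have key: "real x / (real z + real x) + 1 / (real z + real x + 1) - (real x + 1) / (real z + real x + 1)
      \<le> (real x + 1) / (real z + real x + 1)^2"
    by (rule keyineq) (use zp in auto)
  have h1: "harm (z + Suc x) = harm (z + x) + 1 / (real z + real x + 1)"
    by (simp add: harm_Suc add.commute add.left_commute divide_inverse)
  have h2: "(\<Sum>j\<in>{1..Suc x}. real j / (real z + real j)^2) = (\<Sum>j\<in>{1..x}. real j / (real z + real j)^2) + (real x + 1) / (real z + real x + 1)^2"
    by (simp add: add.commute add.left_commute)
  have h3: "real (Suc x) / (real z + real (Suc x)) = (real x + 1) / (real z + real x + 1)"
    by (simp add: add.commute add.left_commute)
  show ?case using Suc.IH key h1 h2 h3 by linarith
qed



lemma ln3_lt: "ln (3::real) < 5/4"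
proof -
  have "exp (5/4::real) = exp (5/32) ^ 8"
    by (subst exp_of_nat_mult[symmetric]) simp
  moreover have "(1 + 5/32::real) ^ 8 \<le> exp (5/32) ^ 8"
    by (intro power_mono exp_ge_add_one_self) simp
  moreover have "(3::real) < (1 + 5/32) ^ 8" by (simp add: power_divide)
  ultimately have "3 < exp (5/4::real)" by linarith
  hence "ln 3 < ln (exp (5/4::real))" by (subst ln_less_cancel_iff) auto
  thus ?thesis by simp
qed

lemma T34:
  "(\<Sum>j\<in>{1..z}. (real j + 1) / (real j)^2) + (\<Sum>j\<in>{1..x}. real j / (real z + real j)^2) \<ge> harm (z + x)"
proof (cases "z = 0")
  case True
  have "(\<Sum>j\<in>{1..x}. real j / (real z + real j)^2) = harm x"
    unfolding harm_def True by (intro sum.cong) (auto simp: power2_eq_square divide_inverse)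
  thus ?thesis using True by simp
next
  case False
  hence z: "z \<ge> 1" by simp
  have a: "(\<Sum>j\<in>{1..z}. (real j + 1) / (real j)^2) \<ge> harm z + 1"
    using sumA[of z] sq_sum1[OF z] by linarith
  have b: "real x / (real z + real x) \<le> 1" using z by (simp add: divide_le_eq_1)
  show ?thesis using a b T4_bound[OF z, of x] by linarith
qed

lemma S_sorted_bound:
  assumes xyz: "x + y + z = n" "z \<le> y" "y \<le> x" "x \<ge> 2"
  shows "Ssum n (int x, int y, int z) > 2 * ln (real n + 1)"
proof -
  have t1: "(\<Sum>j\<in>{1..x}. (real j + 1) / (real j)^2) \<ge> harm x + 5/4"
    using sumA[of x] sq_sum2[OF xyz(4)] by linarith
  have t2: "(\<Sum>j\<in>{1..y}. (real j + 1) / (real j)^2) \<ge> harm y"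
    using sumA[of y] sq_nonneg_sum[of y] by linarith
  have hx: "harm x \<ge> ln (real x + 1)" "harm y \<ge> ln (real y + 1)" "harm (z + x) \<ge> ln (real (z + x) + 1)"
    by (rule ln_le_harm)+
  define P where "P = (real x + 1) * (real y + 1) * (real x + real z + 1)"
  have Ppos: "P > 0" unfolding P_def by (intro mult_pos_pos) auto
  have lnP: "ln P = ln (real x + 1) + ln (real y + 1) + ln (real (z + x) + 1)"
    unfolding P_def by (simp add: ln_mult add.commute add.left_commute)
  have q1: "real n + 1 \<le> 3 * (real x + 1)" using xyz by simp
  have q2: "real n + 1 \<le> (real y + 1) * (real x + real z + 1)"
  proof -
    have "(real y + 1) * (real x + real z + 1) = real y * (real x + real z) + real y + real x + real z + 1"
      by (simp add: algebra_simps)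
    moreover have "real y * (real x + real z) \<ge> 0" by simp
    moreover have "real n = real x + real y + real z" using xyz(1) by simp
    ultimately show ?thesis by linarith
  qed
  have "(real n + 1)^2 \<le> (3 * (real x + 1)) * ((real y + 1) * (real x + real z + 1))"
    unfolding power2_eq_square by (intro mult_mono q1 q2) auto
  hence sq: "(real n + 1)^2 \<le> 3 * P" unfolding P_def by (simp add: algebra_simps)
  have "2 * ln (real n + 1) = ln ((real n + 1)^2)" by (simp add: ln_realpow)
  also have "\<dots> \<le> ln (3 * P)" using sq Ppos by (subst ln_le_cancel_iff) auto
  also have "\<dots> = ln 3 + ln P" using Ppos by (simp add: ln_mult)
  finally have "2 * ln (real n + 1) < 5/4 + ln P" using ln3_lt by linarith
  moreover have "Ssum n (int x, int y, int z) \<ge> harm x + 5/4 + harm y + harm (z + x)"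
    using S_sorted[OF xyz(1-3)] t1 t2 T34[of z x] by linarith
  ultimately show ?thesis using hx lnP by linarith
qed



lemma sym_relpow:
  assumes inv: "\<And>v. \<sigma> (\<sigma> v) = v"
    and A: "\<And>v w. octAdj n (\<sigma> v) (\<sigma> w) \<longleftrightarrow> octAdj n v w"
  shows "(\<sigma> v, \<sigma> w) \<in> octRel n ^^ k \<longleftrightarrow> (v, w) \<in> octRel n ^^ k"
proof (induction k arbitrary: w)
  case 0
  then show ?case by (metis inv relpow_0_I relpow_0_E)
next
  case (Suc k)
  have "(\<sigma> v, \<sigma> w) \<in> octRel n ^^ Suc k \<longleftrightarrow> (\<exists>m. (\<sigma> v, m) \<in> octRel n ^^ k \<and> octAdj n m (\<sigma> w))"
    by (simp add: octRel_def relcomp_unfold)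
  also have "\<dots> \<longleftrightarrow> (\<exists>m. (\<sigma> v, \<sigma> m) \<in> octRel n ^^ k \<and> octAdj n (\<sigma> m) (\<sigma> w))"
    by (metis inv)
  also have "\<dots> \<longleftrightarrow> (\<exists>m. (v, m) \<in> octRel n ^^ k \<and> octAdj n m w)"
    using Suc A by simp
  also have "\<dots> \<longleftrightarrow> (v, w) \<in> octRel n ^^ Suc k"
    by (simp add: octRel_def relcomp_unfold)
  finally show ?case .
qed

lemma sym_Ssum:
  assumes inv: "\<And>v. \<sigma> (\<sigma> v) = v" and V: "\<And>v. \<sigma> v \<in> octV n \<longleftrightarrow> v \<in> octV n"
    and A: "\<And>v w. octAdj n (\<sigma> v) (\<sigma> w) \<longleftrightarrow> octAdj n v w"
  shows "Ssum n (\<sigma> b) = Ssum n b"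
proof -
  have d: "octDist n (\<sigma> v) (\<sigma> w) = octDist n v w" for v w
    unfolding octDist_def using sym_relpow[OF inv A] by simp
  have inj: "inj_on \<sigma> (octV n - {b})" by (metis inj_onI inv)
  have img: "octV n - {\<sigma> b} = \<sigma> ` (octV n - {b})"
  proof
    show "octV n - {\<sigma> b} \<subseteq> \<sigma> ` (octV n - {b})"
    proof
      fix w assume w: "w \<in> octV n - {\<sigma> b}"
      hence "\<sigma> w \<in> octV n - {b}" using V inv by (metis DiffD1 DiffD2 DiffI insertI1 singletonD)
      moreover have "w = \<sigma> (\<sigma> w)" using inv by simp
      ultimately show "w \<in> \<sigma> ` (octV n - {b})" by blast
    qed
  next
    show "\<sigma> ` (octV n - {b}) \<subseteq> octV n - {\<sigma> b}" using V inv by (auto, metis)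
  qed
  show ?thesis unfolding Ssum_def img using inj by (simp add: sum.reindex d)
qed

definition neg1 :: "vtx \<Rightarrow> vtx" where "neg1 = (\<lambda>(a,b,c). (-a,b,c))"
definition neg2 :: "vtx \<Rightarrow> vtx" where "neg2 = (\<lambda>(a,b,c). (a,-b,c))"
definition neg3 :: "vtx \<Rightarrow> vtx" where "neg3 = (\<lambda>(a,b,c). (a,b,-c))"
definition sw12 :: "vtx \<Rightarrow> vtx" where "sw12 = (\<lambda>(a,b,c). (b,a,c))"
definition sw23 :: "vtx \<Rightarrow> vtx" where "sw23 = (\<lambda>(a,b,c). (a,c,b))"
definition sw13 :: "vtx \<Rightarrow> vtx" where "sw13 = (\<lambda>(a,b,c). (c,b,a))"

lemma neg1_inv: "neg1 (neg1 v) = v" by (cases v) (simp add: neg1_def)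
lemma neg1_V: "neg1 v \<in> octV n \<longleftrightarrow> v \<in> octV n" by (cases v) (auto simp: neg1_def octV_def)
lemma neg1_A: "octAdj n (neg1 v) (neg1 w) \<longleftrightarrow> octAdj n v w"
  by (cases v, cases w) (auto simp: neg1_def octV_def octAdj_def abs_minus_commute)
lemma S_neg1: "Ssum n (-a,b,c) = Ssum n (a,b,c)"
proof -
  have "Ssum n (neg1 (a,b,c)) = Ssum n (a,b,c)" by (rule sym_Ssum) (simp_all only: neg1_inv neg1_V neg1_A)
  thus ?thesis by (simp add: neg1_def)
qed

lemma neg2_inv: "neg2 (neg2 v) = v" by (cases v) (simp add: neg2_def)
lemma neg2_V: "neg2 v \<in> octV n \<longleftrightarrow> v \<in> octV n" by (cases v) (auto simp: neg2_def octV_def)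
lemma neg2_A: "octAdj n (neg2 v) (neg2 w) \<longleftrightarrow> octAdj n v w"
  by (cases v, cases w) (auto simp: neg2_def octV_def octAdj_def abs_minus_commute)
lemma S_neg2: "Ssum n (a,-b,c) = Ssum n (a,b,c)"
proof -
  have "Ssum n (neg2 (a,b,c)) = Ssum n (a,b,c)" by (rule sym_Ssum) (simp_all only: neg2_inv neg2_V neg2_A)
  thus ?thesis by (simp add: neg2_def)
qed

lemma neg3_inv: "neg3 (neg3 v) = v" by (cases v) (simp add: neg3_def)
lemma neg3_V: "neg3 v \<in> octV n \<longleftrightarrow> v \<in> octV n" by (cases v) (auto simp: neg3_def octV_def)
lemma neg3_A: "octAdj n (neg3 v) (neg3 w) \<longleftrightarrow> octAdj n v w"
  by (cases v, cases w) (auto simp: neg3_def octV_def octAdj_def abs_minus_commute)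
lemma S_neg3: "Ssum n (a,b,-c) = Ssum n (a,b,c)"
proof -
  have "Ssum n (neg3 (a,b,c)) = Ssum n (a,b,c)" by (rule sym_Ssum) (simp_all only: neg3_inv neg3_V neg3_A)
  thus ?thesis by (simp add: neg3_def)
qed

lemma sw12_inv: "sw12 (sw12 v) = v" by (cases v) (simp add: sw12_def)
lemma sw12_V: "sw12 v \<in> octV n \<longleftrightarrow> v \<in> octV n" by (cases v) (auto simp: sw12_def octV_def)
lemma sw12_A: "octAdj n (sw12 v) (sw12 w) \<longleftrightarrow> octAdj n v w"
  by (cases v, cases w) (auto simp: sw12_def octV_def octAdj_def )
lemma S_sw12: "Ssum n (b,a,c) = Ssum n (a,b,c)"
proof -
  have "Ssum n (sw12 (a,b,c)) = Ssum n (a,b,c)" by (rule sym_Ssum) (simp_all only: sw12_inv sw12_V sw12_A)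
  thus ?thesis by (simp add: sw12_def)
qed

lemma sw23_inv: "sw23 (sw23 v) = v" by (cases v) (simp add: sw23_def)
lemma sw23_V: "sw23 v \<in> octV n \<longleftrightarrow> v \<in> octV n" by (cases v) (auto simp: sw23_def octV_def)
lemma sw23_A: "octAdj n (sw23 v) (sw23 w) \<longleftrightarrow> octAdj n v w"
  by (cases v, cases w) (auto simp: sw23_def octV_def octAdj_def )
lemma S_sw23: "Ssum n (a,c,b) = Ssum n (a,b,c)"
proof -
  have "Ssum n (sw23 (a,b,c)) = Ssum n (a,b,c)" by (rule sym_Ssum) (simp_all only: sw23_inv sw23_V sw23_A)
  thus ?thesis by (simp add: sw23_def)
qed

lemma sw13_inv: "sw13 (sw13 v) = v" by (cases v) (simp add: sw13_def)
lemma sw13_V: "sw13 v \<in> octV n \<longleftrightarrow> v \<in> octV n" by (cases v) (auto simp: sw13_def octV_def)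
lemma sw13_A: "octAdj n (sw13 v) (sw13 w) \<longleftrightarrow> octAdj n v w"
  by (cases v, cases w) (auto simp: sw13_def octV_def octAdj_def )
lemma S_sw13: "Ssum n (c,b,a) = Ssum n (a,b,c)"
proof -
  have "Ssum n (sw13 (a,b,c)) = Ssum n (a,b,c)" by (rule sym_Ssum) (simp_all only: sw13_inv sw13_V sw13_A)
  thus ?thesis by (simp add: sw13_def)
qed



lemma S_sorted_int:
  assumes "0 \<le> c" "c \<le> b" "b \<le> a" "a + b + c = int n" "n \<ge> 6"
  shows "Ssum n (a,b,c) > 2 * ln (real n + 1)"
proof -
  have "nat a + nat b + nat c = n" "nat c \<le> nat b" "nat b \<le> nat a" "nat a \<ge> 2" using assms by auto
  from S_sorted_bound[OF this] show ?thesis using assms by simp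
qed

lemma S_nonneg_int:
  assumes "0 \<le> a" "0 \<le> b" "0 \<le> c" "a + b + c = int n" "n \<ge> 6"
  shows "Ssum n (a,b,c) > 2 * ln (real n + 1)"
proof -
  consider "c \<le> b \<and> b \<le> a" | "c \<le> a \<and> a \<le> b" | "b \<le> c \<and> c \<le> a" | "a \<le> b \<and> b \<le> c"
    | "a \<le> c \<and> c \<le> b" | "b \<le> a \<and> a \<le> c" by linarith
  then show ?thesis
  proof cases
    case 1 then show ?thesis using S_sorted_int assms by auto
  next
    case 2
    have "Ssum n (b,a,c) > 2 * ln (real n + 1)" using 2 assms by (intro S_sorted_int) auto
    thus ?thesis using S_sw12[of n a b c] by simp
  next
    case 3
    have "Ssum n (a,c,b) > 2 * ln (real n + 1)" using 3 assms by (intro S_sorted_int) auto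
    thus ?thesis using S_sw23[of n a b c] by simp
  next
    case 4
    have "Ssum n (c,b,a) > 2 * ln (real n + 1)" using 4 assms by (intro S_sorted_int) auto
    thus ?thesis using S_sw13[of n a b c] by simp
  next
    case 5
    have "Ssum n (b,c,a) > 2 * ln (real n + 1)" using 5 assms by (intro S_sorted_int) auto
    thus ?thesis using S_sw13[of n a c b] S_sw23[of n a b c] by simp
  next
    case 6
    have "Ssum n (c,a,b) > 2 * ln (real n + 1)" using 6 assms by (intro S_sorted_int) auto
    thus ?thesis using S_sw13[of n b a c] S_sw12[of n a b c] by simp
  qed
qed

lemma S_bound:
  assumes "b \<in> octV n" "n \<ge> 6"
  shows "Ssum n b > 2 * ln (real n + 1)"
proof -
  obtain p q r where b: "b = (p,q,r)" by (cases b)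
  have s: "\<bar>p\<bar> + \<bar>q\<bar> + \<bar>r\<bar> = int n" using assms b by (simp add: octV_def)
  have e1: "Ssum n (\<bar>p\<bar>,q,r) = Ssum n (p,q,r)" by (cases "p \<ge> 0") (simp_all add: S_neg1)
  have e2: "Ssum n (\<bar>p\<bar>,\<bar>q\<bar>,r) = Ssum n (\<bar>p\<bar>,q,r)" by (cases "q \<ge> 0") (simp_all add: S_neg2)
  have e3: "Ssum n (\<bar>p\<bar>,\<bar>q\<bar>,\<bar>r\<bar>) = Ssum n (\<bar>p\<bar>,\<bar>q\<bar>,r)" by (cases "r \<ge> 0") (simp_all add: S_neg3)
  have "Ssum n (\<bar>p\<bar>,\<bar>q\<bar>,\<bar>r\<bar>) > 2 * ln (real n + 1)"
    by (rule S_nonneg_int) (use s assms in auto)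
  thus ?thesis using e1 e2 e3 b by simp
qed



lemma card_box: "card (({-2..2::int} \<times> {-2..2::int}) - {(0,0)}) = 24"
proof -
  have "card ({-2..2::int} \<times> {-2..2::int}) = 25" by (simp add: card_cartesian_product)
  moreover have "(0,0) \<in> {-2..2::int} \<times> {-2..2::int}" by simp
  ultimately show ?thesis by (simp add: card_Diff_singleton)
qed

lemma keyabs: "\<bar>a\<bar> + m = (n::int) \<Longrightarrow> \<bar>a'\<bar> + m = n \<Longrightarrow>
     \<bar>a - u\<bar> \<le> 2 \<Longrightarrow> \<bar>a' - u\<bar> \<le> 2 \<Longrightarrow> \<bar>u\<bar> \<ge> 3 \<Longrightarrow> a = (a'::int)"
proof -
  assume a: "\<bar>a\<bar> + m = (n::int)" "\<bar>a'\<bar> + m = n"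
     "\<bar>a - u\<bar> \<le> 2" "\<bar>a' - u\<bar> \<le> 2" "\<bar>u\<bar> \<ge> 3"
  have e: "\<bar>a\<bar> = \<bar>a'\<bar>" using a(1,2) by linarith
  show ?thesis using e a(3-5) by arith
qed

definition Bbox :: "nat \<Rightarrow> vtx \<Rightarrow> vtx set" where
  "Bbox n u = {b \<in> octV n. b \<noteq> u \<and> \<bar>fst b - fst u\<bar> \<le> 2 \<and> \<bar>fst (snd b) - fst (snd u)\<bar> \<le> 2 \<and> \<bar>snd (snd b) - snd (snd u)\<bar> \<le> 2}"

lemma cardB1:
  assumes u: "u = (u1,u2,u3)" "u \<in> octV n" "\<bar>u1\<bar> \<ge> 3"
  shows "card (Bbox n u) \<le> 24"
proof -
  define f where "f = (\<lambda>b::vtx. (fst (snd b) - u2, snd (snd b) - u3))"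
  have inj: "inj_on f (Bbox n u)"
  proof (rule inj_onI)
    fix b b' assume b: "b \<in> Bbox n u" and b': "b' \<in> Bbox n u" and e: "f b = f b'"
    obtain a1 a2 a3 where ba: "b = (a1,a2,a3)" by (cases b)
    obtain c1 c2 c3 where bc: "b' = (c1,c2,c3)" by (cases b')
    have *: "a2 = c2" "a3 = c3" using e ba bc by (auto simp: f_def)
    have "a1 = c1" by (rule keyabs[of _ "\<bar>a2\<bar> + \<bar>a3\<bar>" "int n" _ "u1"]) (use b b' ba bc u * in \<open>auto simp: octV_def Bbox_def\<close>)
    thus "b = b'" using ba bc * by simp
  qed
  have sub: "f ` Bbox n u \<subseteq> ({-2..2::int} \<times> {-2..2::int}) - {(0,0)}"
  proof
    fix p assume "p \<in> f ` Bbox n u"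
    then obtain b where b: "b \<in> Bbox n u" and p: "p = f b" by auto
    obtain a1 a2 a3 where ba: "b = (a1,a2,a3)" by (cases b)
    have "p \<noteq> (0,0)"
    proof
      assume "p = (0,0)"
      hence *: "a2 = u2" "a3 = u3" using p ba by (auto simp: f_def)
      have "a1 = u1" by (rule keyabs[of _ "\<bar>a2\<bar> + \<bar>a3\<bar>" "int n" _ "u1"]) (use b ba u * in \<open>auto simp: octV_def Bbox_def\<close>)
      thus False using b ba u * by (auto simp: Bbox_def)
    qed
    thus "p \<in> ({-2..2::int} \<times> {-2..2::int}) - {(0,0)}" using b p ba u by (auto simp: f_def Bbox_def)
  qed
  have "card (Bbox n u) = card (f ` Bbox n u)" using inj by (simp add: card_image)
  also have "\<dots> \<le> card (({-2..2::int} \<times> {-2..2::int}) - {(0,0)})" by (rule card_mono[OF _ sub]) simp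
  finally show ?thesis using card_box by simp
qed

lemma cardB2:
  assumes u: "u = (u1,u2,u3)" "u \<in> octV n" "\<bar>u2\<bar> \<ge> 3"
  shows "card (Bbox n u) \<le> 24"
proof -
  define f where "f = (\<lambda>b::vtx. (fst b - u1, snd (snd b) - u3))"
  have inj: "inj_on f (Bbox n u)"
  proof (rule inj_onI)
    fix b b' assume b: "b \<in> Bbox n u" and b': "b' \<in> Bbox n u" and e: "f b = f b'"
    obtain a1 a2 a3 where ba: "b = (a1,a2,a3)" by (cases b)
    obtain c1 c2 c3 where bc: "b' = (c1,c2,c3)" by (cases b')
    have *: "a1 = c1" "a3 = c3" using e ba bc by (auto simp: f_def)
    have "a2 = c2" by (rule keyabs[of _ "\<bar>a1\<bar> + \<bar>a3\<bar>" "int n" _ "u2"]) (use b b' ba bc u * in \<open>auto simp: octV_def Bbox_def\<close>)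
    thus "b = b'" using ba bc * by simp
  qed
  have sub: "f ` Bbox n u \<subseteq> ({-2..2::int} \<times> {-2..2::int}) - {(0,0)}"
  proof
    fix p assume "p \<in> f ` Bbox n u"
    then obtain b where b: "b \<in> Bbox n u" and p: "p = f b" by auto
    obtain a1 a2 a3 where ba: "b = (a1,a2,a3)" by (cases b)
    have "p \<noteq> (0,0)"
    proof
      assume "p = (0,0)"
      hence *: "a1 = u1" "a3 = u3" using p ba by (auto simp: f_def)
      have "a2 = u2" by (rule keyabs[of _ "\<bar>a1\<bar> + \<bar>a3\<bar>" "int n" _ "u2"]) (use b ba u * in \<open>auto simp: octV_def Bbox_def\<close>)
      thus False using b ba u * by (auto simp: Bbox_def)
    qed
    thus "p \<in> ({-2..2::int} \<times> {-2..2::int}) - {(0,0)}" using b p ba u by (auto simp: f_def Bbox_def)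
  qed
  have "card (Bbox n u) = card (f ` Bbox n u)" using inj by (simp add: card_image)
  also have "\<dots> \<le> card (({-2..2::int} \<times> {-2..2::int}) - {(0,0)})" by (rule card_mono[OF _ sub]) simp
  finally show ?thesis using card_box by simp
qed

lemma cardB3:
  assumes u: "u = (u1,u2,u3)" "u \<in> octV n" "\<bar>u3\<bar> \<ge> 3"
  shows "card (Bbox n u) \<le> 24"
proof -
  define f where "f = (\<lambda>b::vtx. (fst b - u1, fst (snd b) - u2))"
  have inj: "inj_on f (Bbox n u)"
  proof (rule inj_onI)
    fix b b' assume b: "b \<in> Bbox n u" and b': "b' \<in> Bbox n u" and e: "f b = f b'"
    obtain a1 a2 a3 where ba: "b = (a1,a2,a3)" by (cases b)
    obtain c1 c2 c3 where bc: "b' = (c1,c2,c3)" by (cases b')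
    have *: "a1 = c1" "a2 = c2" using e ba bc by (auto simp: f_def)
    have "a3 = c3" by (rule keyabs[of _ "\<bar>a1\<bar> + \<bar>a2\<bar>" "int n" _ "u3"]) (use b b' ba bc u * in \<open>auto simp: octV_def Bbox_def\<close>)
    thus "b = b'" using ba bc * by simp
  qed
  have sub: "f ` Bbox n u \<subseteq> ({-2..2::int} \<times> {-2..2::int}) - {(0,0)}"
  proof
    fix p assume "p \<in> f ` Bbox n u"
    then obtain b where b: "b \<in> Bbox n u" and p: "p = f b" by auto
    obtain a1 a2 a3 where ba: "b = (a1,a2,a3)" by (cases b)
    have "p \<noteq> (0,0)"
    proof
      assume "p = (0,0)"
      hence *: "a1 = u1" "a2 = u2" using p ba by (auto simp: f_def)
      have "a3 = u3" by (rule keyabs[of _ "\<bar>a1\<bar> + \<bar>a2\<bar>" "int n" _ "u3"]) (use b ba u * in \<open>auto simp: octV_def Bbox_def\<close>)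
      thus False using b ba u * by (auto simp: Bbox_def)
    qed
    thus "p \<in> ({-2..2::int} \<times> {-2..2::int}) - {(0,0)}" using b p ba u by (auto simp: f_def Bbox_def)
  qed
  have "card (Bbox n u) = card (f ` Bbox n u)" using inj by (simp add: card_image)
  also have "\<dots> \<le> card (({-2..2::int} \<times> {-2..2::int}) - {(0,0)})" by (rule card_mono[OF _ sub]) simp
  finally show ?thesis using card_box by simp
qed



lemma cardB:
  assumes "u \<in> octV n" "n \<ge> 7"
  shows "card (Bbox n u) \<le> 24"
proof -
  obtain u1 u2 u3 where u: "u = (u1,u2,u3)" by (cases u)
  have "\<bar>u1\<bar> + \<bar>u2\<bar> + \<bar>u3\<bar> = int n" using assms u by (simp add: octV_def)
  hence "\<bar>u1\<bar> \<ge> 3 \<or> \<bar>u2\<bar> \<ge> 3 \<or> \<bar>u3\<bar> \<ge> 3" using assms(2) by linarith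
  thus ?thesis using cardB1[OF u assms(1)] cardB2[OF u assms(1)] cardB3[OF u assms(1)] by blast
qed

lemma finite_Bbox: "finite (Bbox n u)"
  unfolding Bbox_def using finite_octV by simp

lemma pmf_choice:
  assumes "b \<in> octV n" "u \<in> octV n" "u \<noteq> b" "Ssum n b > 0"
  shows "pmf (choice_pmf n b) u = octZ n b / (real (octDist n b u))^2"
proof -
  define f where "f = (\<lambda>v. if v \<in> octV n \<and> v \<noteq> b then octZ n b / (real (octDist n b v))^2 else 0)"
  have Z: "octZ n b = inverse (Ssum n b)" unfolding octZ_def Ssum_def ..
  have Zpos: "octZ n b > 0" using Z assms(4) by simp
  have nn: "\<And>x. 0 \<le> f x" unfolding f_def using Zpos by auto
  have "(\<Sum>x\<in>octV n - {b}. f x) = (\<Sum>x\<in>octV n - {b}. octZ n b * (1 / (real (octDist n b x))^2))"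
    unfolding f_def by (intro sum.cong) auto
  also have "\<dots> = octZ n b * Ssum n b" unfolding Ssum_def by (simp add: sum_distrib_left)
  also have "\<dots> = 1" using Z assms(4) by simp
  finally have s1: "(\<Sum>x\<in>octV n - {b}. f x) = 1" .
  have "(\<integral>\<^sup>+x. ennreal (f x) \<partial>count_space UNIV) = (\<Sum>x\<in>octV n - {b}. ennreal (f x))"
    by (rule nn_integral_count_space') (auto simp: finite_octV f_def)
  also have "\<dots> = ennreal (\<Sum>x\<in>octV n - {b}. f x)" using nn by (simp add: sum_ennreal)
  also have "\<dots> = 1" using s1 by simp
  finally have int1: "(\<integral>\<^sup>+x. ennreal (f x) \<partial>count_space UNIV) = 1" .
  have "pmf (choice_pmf n b) u = f u"
    unfolding choice_pmf_def f_def[symmetric] using nn int1 by (rule pmf_embed_pmf)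
  thus ?thesis using assms unfolding f_def by auto
qed

lemma prob_choice:
  assumes "b \<in> octV n"
  shows "measure_pmf.prob (osw_pmf n) {f. f b = u} = pmf (choice_pmf n b) u"
proof -
  have "{f. f b = u} = (\<lambda>f. f b) -` {u}" by auto
  hence "measure_pmf.prob (osw_pmf n) {f. f b = u} = measure_pmf.prob (map_pmf (\<lambda>f. f b) (osw_pmf n)) {u}"
    by (simp add: measure_map_pmf)
  also have "map_pmf (\<lambda>f. f b) (osw_pmf n) = choice_pmf n b"
    unfolding osw_pmf_def using assms by (simp add: Pi_pmf_component finite_octV)
  finally show ?thesis by (simp add: measure_pmf_single)
qed

lemma ln7_lt: "ln (7::real) < 3"
proof -
  have "exp (3::real) = exp (3/4) ^ 4"
    by (subst exp_of_nat_mult[symmetric]) simp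
  moreover have "(1 + 3/4::real) ^ 4 \<le> exp (3/4) ^ 4"
    by (intro power_mono exp_ge_add_one_self) simp
  moreover have "(7::real) < (1 + 3/4) ^ 4" by (simp add: power_divide)
  ultimately have "7 < exp (3::real)" by linarith
  hence "ln 7 < ln (exp (3::real))" by (subst ln_less_cancel_iff) auto
  thus ?thesis by simp
qed

theorem lemma5:
  fixes n :: nat and u :: vtx
  assumes "n \<ge> 1" and "u \<in> octV n"
  shows "measure_pmf.prob (osw_pmf n) (E1 n u) < 3 / ln (real n + 1)"
proof -
  define L where "L = ln (real n + 1)"
  have Lpos: "L > 0" unfolding L_def using assms(1) by simp
  show ?thesis
  proof (cases "n \<le> 6")
    case True
    have "L \<le> ln 7" unfolding L_def using True by (subst ln_le_cancel_iff) auto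
    hence "L < 3" using ln7_lt by linarith
    hence "1 < 3 / L" using Lpos by (simp add: divide_simps)
    moreover have "measure_pmf.prob (osw_pmf n) (E1 n u) \<le> 1" by simp
    ultimately show ?thesis unfolding L_def by linarith
  next
    case False
    hence n7: "n \<ge> 7" by simp
    define B where "B = {b \<in> Bbox n u. octDist n b u \<ge> 2}"
    have finB: "finite B" unfolding B_def using finite_Bbox by simp
    have cardB': "card B \<le> 24"
      using card_mono[OF finite_Bbox, of B n u] cardB[OF assms(2) n7] unfolding B_def by auto
    have sub: "E1 n u \<subseteq> (\<Union>b\<in>B. {f. f b = u})"
    proof
      fix f assume "f \<in> E1 n u"
      then obtain a b where ab: "a \<in> octV n" "b \<in> octV n" "u \<noteq> a" "u \<noteq> b" "a \<noteq> b"
        "octAdj n u a" "octAdj n a b" "type_w n f b u" unfolding E1_def by blast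
      have h1: "\<bar>fst u - fst a\<bar> \<le> 1" "\<bar>fst (snd u) - fst (snd a)\<bar> \<le> 1" "\<bar>snd (snd u) - snd (snd a)\<bar> \<le> 1"
        using ab(6) unfolding octAdj_def by simp_all
      have h2: "\<bar>fst a - fst b\<bar> \<le> 1" "\<bar>fst (snd a) - fst (snd b)\<bar> \<le> 1" "\<bar>snd (snd a) - snd (snd b)\<bar> \<le> 1"
        using ab(7) unfolding octAdj_def by simp_all
      have h3: "\<bar>fst b - fst u\<bar> \<le> 2" using h1(1) h2(1) by arith
      have h4: "\<bar>fst (snd b) - fst (snd u)\<bar> \<le> 2" using h1(2) h2(2) by arith
      have h5: "\<bar>snd (snd b) - snd (snd u)\<bar> \<le> 2" using h1(3) h2(3) by arith
      have h6: "octDist n b u \<ge> 2" using ab(8) unfolding type_w_def by simp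
      have "b \<in> B" unfolding B_def Bbox_def using ab(2,4) h3 h4 h5 h6 by simp
      moreover have "f b = u" using ab(8) unfolding type_w_def by simp
      ultimately show "f \<in> (\<Union>b\<in>B. {f. f b = u})" by blast
    qed
    have "measure_pmf.prob (osw_pmf n) (E1 n u) \<le> measure_pmf.prob (osw_pmf n) (\<Union>b\<in>B. {f. f b = u})"
      by (rule measure_pmf.finite_measure_mono[OF sub]) simp
    also have "\<dots> \<le> (\<Sum>b\<in>B. measure_pmf.prob (osw_pmf n) {f. f b = u})"
      by (rule measure_pmf.finite_measure_subadditive_finite[OF finB]) simp
    finally have p1: "measure_pmf.prob (osw_pmf n) (E1 n u) \<le> (\<Sum>b\<in>B. measure_pmf.prob (osw_pmf n) {f. f b = u})" .
    have tm: "measure_pmf.prob (osw_pmf n) {f. f b = u} < 1 / (8 * L)" if b: "b \<in> B" for b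
    proof -
      have bV: "b \<in> octV n" "b \<noteq> u" "octDist n b u \<ge> 2" using b unfolding B_def Bbox_def by auto
      have S: "Ssum n b > 2 * L" using S_bound[OF bV(1)] n7 unfolding L_def by simp
      hence Spos: "Ssum n b > 0" using Lpos by linarith
      have Z: "octZ n b = inverse (Ssum n b)" unfolding octZ_def Ssum_def ..
      have ub: "u \<noteq> b" using bV(2) by (rule not_sym)
      have "measure_pmf.prob (osw_pmf n) {f. f b = u} = octZ n b / (real (octDist n b u))^2"
        by (rule trans[OF prob_choice[OF bV(1)] pmf_choice[OF bV(1) assms(2) ub Spos]])
      also have "\<dots> \<le> octZ n b / 4"
      proof -
        have dr: "real (octDist n b u) \<ge> 2" using bV(3) by simp
        have d2: "4 \<le> (real (octDist n b u))^2" using power_mono[OF dr, of 2] by simp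
        have Zge: "0 \<le> octZ n b" using Z Spos by simp
        have pp: "0 < (real (octDist n b u))^2 * 4" using dr by simp
        show ?thesis by (rule divide_left_mono[OF d2 Zge pp])
      qed
      also have "\<dots> = 1 / (4 * Ssum n b)" unfolding Z by (simp add: inverse_eq_divide mult.commute)
      also have "\<dots> < 1 / (8 * L)"
      proof -
        have q1: "8 * L < 4 * Ssum n b" using S by linarith
        have q2: "(0::real) < 1" by simp
        have q3: "0 < 4 * Ssum n b * (8 * L)" using Spos Lpos by simp
        show ?thesis by (rule divide_strict_left_mono[OF q1 q2 q3])
      qed
      finally show ?thesis .
    qed
    have "(\<Sum>b\<in>B. measure_pmf.prob (osw_pmf n) {f. f b = u}) < 3 / L"
    proof (cases "B = {}")
      case True
      then show ?thesis using Lpos by simp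
    next
      case False
      have "(\<Sum>b\<in>B. measure_pmf.prob (osw_pmf n) {f. f b = u}) < (\<Sum>b\<in>B. 1 / (8 * L))"
        by (rule sum_strict_mono[OF finB False tm])
      also have "\<dots> = real (card B) / (8 * L)" by simp
      also have "\<dots> \<le> 24 / (8 * L)" using cardB' Lpos by (intro divide_right_mono) auto
      also have "\<dots> = 3 / L" by simp
      finally show ?thesis .
    qed
    with p1 show ?thesis unfolding L_def by linarith
  qed
qed


end
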